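(* Let $Q$ be a quadrilateral in $K^2$. Two distinct bisectors of $Q$ share the same midpoint if and only if the vertices of $Q$ are the vertices of a parallelogram. In this case, the shared midpoint is the centroid of $Q$.
   Context: $K$ is a field of characteristic $\neq 2$; we work in $K^2$ inside the projective plane. A quadrilateral $Q=ABA'B'$ consists of four distinct lines $A,B,A',B'$ (sides), not all through one point, with adjacent sides ($A,B$; $B,A'$; $A',B'$; $B',A$) not parallel; opposite sides may be parallel. Vertices: $A\cap B$, $B\cap A'$, $A'\cap B'$, $B'\cap A$ (two may coincide if three sides are concurrent). The centroid is the midpoint of the midpoints of the diagonals (the lines through nonadjacent vertices), equivalently the average of the four vertices. A parallelogram is a quadrilateral whose pairs of opposite sides are parallel. A line $\ell$ crosses a pair $\{\ell_1,\ell_2\}$ if it is distinct from both and not parallel to both; $\mathrm{mid}_{\{\ell_1,\ell_2\}}(\ell)$ is the midpoint of the points where $\ell$ meets $\ell_1,\ell_2$ (the point at infinity of $\ell$ if one of them is at infinity). $\ell$ bisects $Q$ (is a bisector) if $\mathrm{mid}_{\mathsf P}(\ell)$ is the same for all pairs $\mathsf P$ among $\{A,A'\},\{B,B'\}$ that $\ell$ crosses; this common point is the midpoint of the bisector. *)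

theory Defs
  imports Main
begin

text \<open>Points of the projective plane are either
finite points or points at infinity; a point at infinity is represented canonically by the
direction space of (any) line through it.\<close>

datatype 'a ppoint = Fin "'a \<times> 'a" | Inf "('a \<times> 'a) set"

definition is_line :: "('a::field \<times> 'a) set \<Rightarrow> bool" where
  "is_line L \<longleftrightarrow> (\<exists>a b c. (a, b) \<noteq> (0, 0) \<and> L = {(x, y). a * x + b * y = c})"

definition dir :: "('a::field \<times> 'a) set \<Rightarrow> ('a \<times> 'a) set" where
  "dir L = {v. \<forall>p\<in>L. (fst p + fst v, snd p + snd v) \<in> L}"

definition parallel :: "('a::field \<times> 'a) set \<Rightarrow> ('a \<times> 'a) set \<Rightarrow> bool" where
  "parallel L M \<longleftrightarrow> L = M \<or> L \<inter> M = {}"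

definition pt_mid :: "('a::field \<times> 'a) \<Rightarrow> ('a \<times> 'a) \<Rightarrow> ('a \<times> 'a)" where
  "pt_mid p q = ((fst p + fst q) / 2, (snd p + snd q) / 2)"

definition meet :: "('a::field \<times> 'a) set \<Rightarrow> ('a \<times> 'a) set \<Rightarrow> 'a ppoint" where
  "meet l L = (if l \<inter> L = {} then Inf (dir l) else Fin (THE p. p \<in> l \<and> p \<in> L))"

definition mid :: "('a::field \<times> 'a) set \<Rightarrow> ('a \<times> 'a) set \<Rightarrow> ('a \<times> 'a) set \<Rightarrow> 'a ppoint" where
  "mid L1 L2 l = (case (meet l L1, meet l L2) of
       (Fin p, Fin q) \<Rightarrow> Fin (pt_mid p q)
     | _ \<Rightarrow> Inf (dir l))"

definition crosses :: "('a::field \<times> 'a) set \<Rightarrow> ('a \<times> 'a) set \<Rightarrow> ('a \<times> 'a) set \<Rightarrow> bool" where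
  "crosses l L1 L2 \<longleftrightarrow> l \<noteq> L1 \<and> l \<noteq> L2 \<and> \<not> (parallel l L1 \<and> parallel l L2)"

definition quadrilateral ::
  "('a::field \<times> 'a) set \<Rightarrow> ('a \<times> 'a) set \<Rightarrow> ('a \<times> 'a) set \<Rightarrow> ('a \<times> 'a) set \<Rightarrow> bool" where
  "quadrilateral A B A' B' \<longleftrightarrow>
     is_line A \<and> is_line B \<and> is_line A' \<and> is_line B' \<and>
     distinct [A, B, A', B'] \<and>
     \<not> (\<exists>p. p \<in> A \<and> p \<in> B \<and> p \<in> A' \<and> p \<in> B') \<and>
     \<not> parallel A B \<and> \<not> parallel B A' \<and> \<not> parallel A' B' \<and> \<not> parallel B' A"

definition vertex :: "('a \<times> 'a) set \<Rightarrow> ('a \<times> 'a) set \<Rightarrow> ('a \<times> 'a)" where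
  "vertex L M = (THE p. p \<in> L \<and> p \<in> M)"

definition vertices ::
  "('a \<times> 'a) set \<Rightarrow> ('a \<times> 'a) set \<Rightarrow> ('a \<times> 'a) set \<Rightarrow> ('a \<times> 'a) set \<Rightarrow> ('a \<times> 'a) set" where
  "vertices A B A' B' = {vertex A B, vertex B A', vertex A' B', vertex B' A}"

definition centroid ::
  "('a::field \<times> 'a) set \<Rightarrow> ('a \<times> 'a) set \<Rightarrow> ('a \<times> 'a) set \<Rightarrow> ('a \<times> 'a) set \<Rightarrow> ('a \<times> 'a)" where
  "centroid A B A' B' = pt_mid (pt_mid (vertex A B) (vertex A' B')) (pt_mid (vertex B A') (vertex B' A))"

definition parallelogram ::
  "('a::field \<times> 'a) set \<Rightarrow> ('a \<times> 'a) set \<Rightarrow> ('a \<times> 'a) set \<Rightarrow> ('a \<times> 'a) set \<Rightarrow> bool" where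
  "parallelogram A B A' B' \<longleftrightarrow> quadrilateral A B A' B' \<and> parallel A A' \<and> parallel B B'"

definition bisects ::
  "('a::field \<times> 'a) set \<Rightarrow> ('a \<times> 'a) set \<Rightarrow> ('a \<times> 'a) set \<Rightarrow> ('a \<times> 'a) set \<Rightarrow> ('a \<times> 'a) set \<Rightarrow> bool" where
  "bisects l A B A' B' \<longleftrightarrow> is_line l \<and>
     (crosses l A A' \<and> crosses l B B' \<longrightarrow> mid A A' l = mid B B' l)"

definition bisector_midpoint ::
  "('a::field \<times> 'a) set \<Rightarrow> ('a \<times> 'a) set \<Rightarrow> ('a \<times> 'a) set \<Rightarrow> ('a \<times> 'a) set \<Rightarrow> ('a \<times> 'a) set \<Rightarrow> 'a ppoint \<Rightarrow> bool" where
  "bisector_midpoint l A B A' B' m \<longleftrightarrow> bisects l A B A' B' \<and>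
     ((crosses l A A' \<and> m = mid A A' l) \<or> (crosses l B B' \<and> m = mid B B' l))"

end

theory Submission
  imports Defs
begin


definition dot :: "('a::field \<times> 'a) \<Rightarrow> 'a \<times> 'a \<Rightarrow> 'a" where
  "dot u w = fst u * fst w + snd u * snd w"
definition Lset :: "('a::field \<times> 'a) \<Rightarrow> 'a \<Rightarrow> ('a \<times> 'a) set" where
  "Lset k d = {x. dot k x = d}"
definition det2 :: "('a::field \<times> 'a) \<Rightarrow> 'a \<times> 'a \<Rightarrow> 'a" where
  "det2 u w = fst u * snd w - snd u * fst w"
definition sig :: "('a::field \<times> 'a) \<Rightarrow> 'a \<times> 'a \<Rightarrow> 'a \<times> 'a" where
  "sig p x = (2 * fst p - fst x, 2 * snd p - snd x)"
definition srefl :: "('a::field \<times> 'a) \<Rightarrow> ('a \<times> 'a) set \<Rightarrow> ('a \<times> 'a) set \<Rightarrow> bool" where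
  "srefl p L M \<longleftrightarrow> (\<forall>x. x \<in> L \<longleftrightarrow> sig p x \<in> M)"
definition cram :: "('a::field \<times> 'a) \<Rightarrow> 'a \<Rightarrow> 'a \<times> 'a \<Rightarrow> 'a \<Rightarrow> 'a \<times> 'a" where
  "cram k d k' d' = ((d * snd k' - d' * snd k) / det2 k k', (fst k * d' - fst k' * d) / det2 k k')"

lemma Lset_mem: "x \<in> Lset k d \<longleftrightarrow> fst k * fst x + snd k * snd x = d"
  by (simp add: Lset_def dot_def)

lemma nz_iff: "(k::'a::field \<times> 'a) \<noteq> (0,0) \<longleftrightarrow> fst k \<noteq> 0 \<or> snd k \<noteq> 0"
  by (cases k) auto

lemma is_line_Lset: "is_line (L::('a::field \<times> 'a) set) \<longleftrightarrow> (\<exists>k d. k \<noteq> (0,0) \<and> L = Lset k d)"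
proof
  assume "is_line L"
  then obtain a b c where ab: "(a,b) \<noteq> (0,0)" "L = {(x,y). a*x+b*y=c}" by (auto simp: is_line_def)
  moreover have "{(x,y). a*x+b*y=c} = Lset (a,b) c" by (auto simp: Lset_mem)
  ultimately show "\<exists>k d. k \<noteq> (0,0) \<and> L = Lset k d" by blast
next
  assume "\<exists>k d. k \<noteq> (0,0) \<and> L = Lset k d"
  then obtain k d where kd: "k \<noteq> (0,0)" "L = Lset k d" by blast
  have "Lset k d = {(x,y). fst k*x + snd k*y = d}" by (auto simp: Lset_mem)
  with kd show "is_line L" unfolding is_line_def
    by (metis prod.collapse)
qed

lemma is_lineE:
  assumes "is_line L"
  obtains k d where "k \<noteq> (0,0)" "L = Lset k d"
  using assms is_line_Lset by blast

lemma is_lineI: "k \<noteq> (0,0) \<Longrightarrow> is_line (Lset k d)"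
  using is_line_Lset by blast

lemma dot_eq_iff:
  assumes "det2 k k' = 0" "k \<noteq> (0,0)" "k' \<noteq> (0,0)"
  shows "dot k u = 0 \<longleftrightarrow> dot k' u = 0"
proof -
  have e1: "fst k * dot k' u = fst k' * dot k u + snd u * det2 k k'"
    by (simp add: dot_def det2_def algebra_simps)
  have e2: "snd k * dot k' u = snd k' * dot k u - fst u * det2 k k'"
    by (simp add: dot_def det2_def algebra_simps)
  have e3: "fst k' * dot k u = fst k * dot k' u - snd u * det2 k k'"
    by (simp add: dot_def det2_def algebra_simps)
  have e4: "snd k' * dot k u = snd k * dot k' u + fst u * det2 k k'"
    by (simp add: dot_def det2_def algebra_simps)
  show ?thesis
    using assms e1 e2 e3 e4 unfolding nz_iff by auto
qed

lemma cram_mem: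
  assumes "det2 k k' \<noteq> 0"
  shows "cram k d k' d' \<in> Lset k d" "cram k d k' d' \<in> Lset k' d'"
proof -
  let ?D = "det2 k k'"
  have a: "fst k * fst (cram k d k' d') + snd k * snd (cram k d k' d')
     = (fst k * (d * snd k' - d' * snd k) + snd k * (fst k * d' - fst k' * d)) / ?D"
    by (simp add: cram_def add_divide_distrib)
  have b: "fst k * (d * snd k' - d' * snd k) + snd k * (fst k * d' - fst k' * d) = d * ?D"
    by (simp add: det2_def algebra_simps)
  have c: "fst k' * fst (cram k d k' d') + snd k' * snd (cram k d k' d')
     = (fst k' * (d * snd k' - d' * snd k) + snd k' * (fst k * d' - fst k' * d)) / ?D"
    by (simp add: cram_def add_divide_distrib)
  have e: "fst k' * (d * snd k' - d' * snd k) + snd k' * (fst k * d' - fst k' * d) = d' * ?D"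
    by (simp add: det2_def algebra_simps)
  show "cram k d k' d' \<in> Lset k d" using a b assms by (simp add: Lset_mem)
  show "cram k d k' d' \<in> Lset k' d'" using c e assms by (simp add: Lset_mem)
qed

lemma par_iff:
  assumes "k \<noteq> (0,0)" "k' \<noteq> (0,0)"
  shows "parallel (Lset k d) (Lset k' d') \<longleftrightarrow> det2 k k' = 0"
proof
  assume "det2 k k' = 0"
  show "parallel (Lset k d) (Lset k' d')"
  proof (cases "Lset k d \<inter> Lset k' d' = {}")
    case True then show ?thesis by (simp add: parallel_def)
  next
    case False
    then obtain p where p: "p \<in> Lset k d" "p \<in> Lset k' d'" by blast
    have "x \<in> Lset k d \<longleftrightarrow> x \<in> Lset k' d'" for x
    proof -
      let ?u = "(fst x - fst p, snd x - snd p)"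
      have "x \<in> Lset k d \<longleftrightarrow> dot k ?u = 0" using p
        by (simp add: Lset_def dot_def algebra_simps)
      also have "\<dots> \<longleftrightarrow> dot k' ?u = 0" using dot_eq_iff[OF \<open>det2 k k' = 0\<close> assms] by blast
      also have "\<dots> \<longleftrightarrow> x \<in> Lset k' d'" using p
        by (simp add: Lset_def dot_def algebra_simps)
      finally show ?thesis .
    qed
    then show ?thesis by (auto simp: parallel_def)
  qed
next
  assume par: "parallel (Lset k d) (Lset k' d')"
  show "det2 k k' = 0"
  proof (rule ccontr)
    assume dz: "det2 k k' \<noteq> 0"
    have c: "cram k d k' d' \<in> Lset k d \<inter> Lset k' d'" using cram_mem[OF dz] by blast
    let ?y = "(fst (cram k d k' d') - snd k, snd (cram k d k' d') + fst k)"
    have "?y \<in> Lset k d" using c by (auto simp: Lset_mem algebra_simps)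
    moreover have "?y \<notin> Lset k' d'" using c dz by (auto simp: Lset_mem det2_def algebra_simps)
    ultimately have "Lset k d \<noteq> Lset k' d'" by blast
    with par c show False by (auto simp: parallel_def)
  qed
qed



lemma par_sym: "parallel L M \<longleftrightarrow> parallel M L"
  by (auto simp: parallel_def)

lemma det_perp:
  assumes "k \<noteq> (0,0)" "dot k u = 0" "dot k w = 0"
  shows "det2 u w = 0"
proof -
  have e1: "fst k * det2 u w = snd w * dot k u - snd u * dot k w"
    by (simp add: dot_def det2_def algebra_simps)
  have e2: "snd k * det2 u w = fst u * dot k w - fst w * dot k u"
    by (simp add: dot_def det2_def algebra_simps)
  show ?thesis using assms e1 e2 unfolding nz_iff by auto
qed

lemma two_pt:
  assumes "is_line L" "is_line M" "p \<noteq> q" "p \<in> L" "q \<in> L" "p \<in> M" "q \<in> M"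
  shows "L = M"
proof -
  obtain k d where k: "k \<noteq> (0,0)" "L = Lset k d" using assms(1) by (rule is_lineE)
  obtain k' d' where k': "k' \<noteq> (0,0)" "M = Lset k' d'" using assms(2) by (rule is_lineE)
  let ?u = "(fst q - fst p, snd q - snd p)"
  have u: "?u \<noteq> (0,0)" using assms(3) by (cases p, cases q) auto
  have "dot ?u k = 0" using assms k by (simp add: Lset_mem dot_def algebra_simps)
  moreover have "dot ?u k' = 0" using assms k' by (simp add: Lset_mem dot_def algebra_simps)
  ultimately have "det2 k k' = 0" using det_perp[OF u] by blast
  then have "parallel L M" using par_iff k k' by blast
  then show ?thesis using assms unfolding parallel_def by blast
qed

lemma par_trans:
  assumes "is_line L" "is_line M" "is_line N" "parallel L M" "parallel M N"
  shows "parallel L N"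
proof -
  obtain k d where k: "k \<noteq> (0,0)" "L = Lset k d" using assms(1) by (rule is_lineE)
  obtain m e where m: "m \<noteq> (0,0)" "M = Lset m e" using assms(2) by (rule is_lineE)
  obtain n f where n: "n \<noteq> (0,0)" "N = Lset n f" using assms(3) by (rule is_lineE)
  have d1: "det2 k m = 0" using assms k m par_iff by blast
  have d2: "det2 m n = 0" using assms n m par_iff by blast
  have e1: "fst m * det2 k n = fst k * det2 m n + fst n * det2 k m"
    by (simp add: det2_def algebra_simps)
  have e2: "snd m * det2 k n = snd k * det2 m n + snd n * det2 k m"
    by (simp add: det2_def algebra_simps)
  have "det2 k n = 0" using e1 e2 d1 d2 m(1) unfolding nz_iff by auto
  then show ?thesis using par_iff k n by blast
qed

lemma npar_ex: "\<not> parallel L M \<Longrightarrow> \<exists>X. X \<in> L \<and> X \<in> M"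
  by (auto simp: parallel_def)

lemma npar_neq: "\<not> parallel L M \<Longrightarrow> L \<noteq> M"
  by (auto simp: parallel_def)

lemma share_npar: "L \<noteq> M \<Longrightarrow> X \<in> L \<Longrightarrow> X \<in> M \<Longrightarrow> \<not> parallel L M"
  by (auto simp: parallel_def)

lemma uniq_pt:
  assumes "is_line L" "is_line M" "\<not> parallel L M" "X \<in> L" "X \<in> M" "Y \<in> L" "Y \<in> M"
  shows "X = Y"
  using two_pt[OF assms(1,2) _ assms(4,6,5,7)] npar_neq[OF assms(3)] by blast

lemma meet_fin:
  assumes "is_line l" "is_line L" "\<not> parallel l L" "X \<in> l" "X \<in> L"
  shows "meet l L = Fin X"
proof -
  have "l \<inter> L \<noteq> {}" using assms by blast
  moreover have "(THE p. p \<in> l \<and> p \<in> L) = X"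
    using uniq_pt[OF assms(1-3)] assms(4,5) by (intro the_equality) blast+
  ultimately show ?thesis by (simp add: meet_def)
qed

lemma meet_inf:
  assumes "parallel l L" "l \<noteq> L"
  shows "meet l L = Inf (dir l)"
  using assms by (simp add: meet_def parallel_def)

lemma vertex_eq:
  assumes "is_line L" "is_line M" "\<not> parallel L M" "X \<in> L" "X \<in> M"
  shows "vertex L M = X"
  unfolding vertex_def
  using uniq_pt[OF assms(1-3)] assms(4,5) by (intro the_equality) blast+

lemma vertex_mem:
  assumes "is_line L" "is_line M" "\<not> parallel L M"
  shows "vertex L M \<in> L" "vertex L M \<in> M"
proof -
  obtain X where "X \<in> L" "X \<in> M" using npar_ex[OF assms(3)] by blast
  then show "vertex L M \<in> L" "vertex L M \<in> M" using vertex_eq[OF assms] by auto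
qed

lemma vertex_sym: "vertex L M = vertex M L"
  by (simp add: vertex_def conj_commute)

lemma mid_fin: "meet l L1 = Fin X \<Longrightarrow> meet l L2 = Fin Y \<Longrightarrow> mid L1 L2 l = Fin (pt_mid X Y)"
  by (simp add: mid_def)

lemma mid_inf1: "meet l L1 = Inf z \<Longrightarrow> mid L1 L2 l = Inf (dir l)"
  by (simp add: mid_def)

lemma mid_inf2: "meet l L2 = Inf z \<Longrightarrow> mid L1 L2 l = Inf (dir l)"
  by (simp add: mid_def split: ppoint.split)

lemma pt_mid_sym: "pt_mid X Y = pt_mid Y X"
  by (simp add: pt_mid_def add.commute)

lemma mid_sym: "mid L1 L2 l = mid L2 L1 l"
  by (simp add: mid_def pt_mid_sym split: ppoint.split)

lemma crosses_sym: "crosses l L1 L2 = crosses l L2 L1"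
  by (auto simp: crosses_def)

lemma sig_sig[simp]: "sig p (sig p x) = x"
  by (simp add: sig_def)

lemma sig_inj: "sig p x = sig p y \<Longrightarrow> x = y"
  by (metis sig_sig)

lemma srefl_D: "srefl p L M \<Longrightarrow> x \<in> L \<Longrightarrow> sig p x \<in> M"
  unfolding srefl_def by blast

lemma srefl_D2: "srefl p L M \<Longrightarrow> sig p x \<in> M \<Longrightarrow> x \<in> L"
  unfolding srefl_def by blast

lemma srefl_sym: "srefl p L M \<Longrightarrow> srefl p M L"
  unfolding srefl_def by (metis sig_sig)

lemma dot_sig: "dot k (sig p x) = 2 * dot k p - dot k x"
  by (simp add: dot_def sig_def algebra_simps)

lemma srefl_Lset: "srefl p (Lset k d) M \<Longrightarrow> M = Lset k (2 * dot k p - d)"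
proof -
  assume r: "srefl p (Lset k d) M"
  have "y \<in> M \<longleftrightarrow> y \<in> Lset k (2 * dot k p - d)" for y
  proof -
    have "y \<in> M \<longleftrightarrow> sig p y \<in> Lset k d" using r unfolding srefl_def by (metis sig_sig)
    also have "\<dots> \<longleftrightarrow> y \<in> Lset k (2 * dot k p - d)" by (auto simp: Lset_def dot_sig)
    finally show ?thesis .
  qed
  then show ?thesis by blast
qed

lemma srefl_Lset2: "srefl p (Lset k d) (Lset k (2 * dot k p - d))"
  unfolding srefl_def by (auto simp: Lset_def dot_sig)

lemma srefl_line:
  assumes "is_line L" "srefl p L M"
  shows "is_line M" "parallel L M"
proof -
  obtain k d where k: "k \<noteq> (0,0)" "L = Lset k d" using assms(1) by (rule is_lineE)
  have M: "M = Lset k (2 * dot k p - d)" using srefl_Lset assms k by blast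
  show "is_line M" using M k is_lineI by blast
  have "det2 k k = 0" by (simp add: det2_def)
  then show "parallel L M" using M k par_iff[OF k(1) k(1)] by simp
qed

lemma line_pt: "k \<noteq> (0,0) \<Longrightarrow> \<exists>x. x \<in> Lset k d"
proof -
  assume "k \<noteq> (0,0)"
  then consider "fst k \<noteq> 0" | "snd k \<noteq> 0" unfolding nz_iff by blast
  then show ?thesis
  proof cases
    case 1 then have "(d / fst k, 0) \<in> Lset k d" by (simp add: Lset_mem)
    then show ?thesis by blast
  next
    case 2 then have "(0, d / snd k) \<in> Lset k d" by (simp add: Lset_mem)
    then show ?thesis by blast
  qed
qed

lemma srefl_self_mem:
  assumes two: "(2::'a::field) \<noteq> 0" and "is_line (L::('a \<times> 'a) set)" "srefl p L L"
  shows "p \<in> L"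
proof -
  obtain k d where k: "k \<noteq> (0,0)" "L = Lset k d" using assms(2) by (rule is_lineE)
  obtain x where x: "x \<in> L" using line_pt k by blast
  then have "sig p x \<in> L" using assms(3) unfolding srefl_def by blast
  then have "2 * dot k p - dot k x = d" "dot k x = d" using x k by (auto simp: Lset_def dot_sig)
  then have "2 * dot k p = 2 * d" by (simp add: algebra_simps)
  then have "dot k p = d" using two by simp
  then show ?thesis using k by (simp add: Lset_def)
qed

lemma mem_srefl_self:
  assumes "is_line L" "p \<in> L"
  shows "srefl p L L"
proof -
  obtain k d where k: "k \<noteq> (0,0)" "L = Lset k d" using assms(1) by (rule is_lineE)
  then have "dot k p = d" using assms by (simp add: Lset_def)
  then show ?thesis using k by (auto simp: srefl_def Lset_def dot_sig)
qed

lemma two_pt_srefl: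
  assumes "is_line L" "is_line M" "p \<noteq> q" "p \<in> L" "q \<in> L" "sig m p \<in> M" "sig m q \<in> M"
  shows "srefl m L M"
proof -
  obtain k d where k: "k \<noteq> (0,0)" "L = Lset k d" using assms(1) by (rule is_lineE)
  let ?L' = "Lset k (2 * dot k m - d)"
  have r: "srefl m L ?L'" using k srefl_Lset2 by blast
  have "is_line ?L'" using k is_lineI by blast
  moreover have "sig m p \<in> ?L'" "sig m q \<in> ?L'" using srefl_D[OF r] assms by blast+
  moreover have "sig m p \<noteq> sig m q" using assms(3) sig_inj by blast
  ultimately have "?L' = M" using two_pt assms(2,6,7) by blast
  then show ?thesis using r by simp
qed

lemma vref:
  assumes "is_line X" "is_line Y" "is_line X'" "is_line Y'"
    "srefl p X X'" "srefl p Y Y'" "\<not> parallel X Y" "\<not> parallel X' Y'"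
  shows "sig p (vertex X Y) = vertex X' Y'"
proof -
  have "vertex X Y \<in> X" "vertex X Y \<in> Y" using vertex_mem assms by blast+
  then have "sig p (vertex X Y) \<in> X'" "sig p (vertex X Y) \<in> Y'" using srefl_D assms(5,6) by blast+
  then show ?thesis using vertex_eq assms by metis
qed

lemma pt_mid_sig: "(2::'a::field) \<noteq> 0 \<Longrightarrow> pt_mid x (sig p x) = (p::'a \<times> 'a)"
  by (simp add: pt_mid_def sig_def)

lemma pt_mid_same: "(2::'a::field) \<noteq> 0 \<Longrightarrow> pt_mid x x = (x::'a \<times> 'a)"
  by (cases x) (simp add: pt_mid_def)



definition perpv :: "('a::field \<times> 'a) \<Rightarrow> 'a \<times> 'a" where
  "perpv n = (- snd n, fst n)"

definition phi :: "('a::field \<times> 'a) \<Rightarrow> 'a \<Rightarrow> 'a \<times> 'a \<Rightarrow> 'a \<Rightarrow> 'a \<times> 'a \<Rightarrow> 'a \<times> 'a \<Rightarrow> 'a" where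
  "phi a al a' al' p v = (al - dot a p) * dot a' v + (al' - dot a' p) * dot a v"

lemma dot_pt_mid: "(2::'a::field) \<noteq> 0 \<Longrightarrow> dot k (pt_mid X Y) * 2 = dot k X + dot (k::'a\<times>'a) Y"
proof -
  assume two: "(2::'a) \<noteq> 0"
  have "fst (pt_mid X Y) * 2 = fst X + fst Y" "snd (pt_mid X Y) * 2 = snd X + snd Y"
    using two by (simp_all add: pt_mid_def)
  moreover have "dot k (pt_mid X Y) * 2 = fst k * (fst (pt_mid X Y) * 2) + snd k * (snd (pt_mid X Y) * 2)"
    by (simp add: dot_def algebra_simps)
  ultimately show ?thesis by (simp add: dot_def algebra_simps)
qed

lemma PHI:
  assumes two: "(2::'a::field) \<noteq> 0" and "dot n X = g" "dot n X' = g" "dot a X = al" "dot a' X' = al'"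
  shows "phi a al a' al' (pt_mid X X') (perpv n) = (0::'a)"
proof -
  let ?p = "pt_mid X X'" and ?v = "perpv n"
  have h1: "dot a ?p * 2 = dot a X + dot a X'" using dot_pt_mid[OF two] .
  have h2: "dot a' ?p * 2 = dot a' X + dot a' X'" using dot_pt_mid[OF two] .
  have "2 * phi a al a' al' ?p ?v = (2 * al - dot a ?p * 2) * dot a' ?v + (2 * al' - dot a' ?p * 2) * dot a ?v"
    by (simp add: phi_def algebra_simps)
  also have "\<dots> = (dot a X - dot a X') * dot a' ?v + (dot a' X' - dot a' X) * dot a ?v"
    using h1 h2 assms by (simp add: algebra_simps)
  also have "\<dots> = det2 a a' * (dot n X - dot n X')"
    by (simp add: dot_def det2_def perpv_def algebra_simps)
  also have "\<dots> = 0" using assms by simp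
  finally show ?thesis using two by simp
qed

lemma phi_zero1: "al = dot a p \<Longrightarrow> dot a v = 0 \<Longrightarrow> phi a al a' al' p v = 0"
  by (simp add: phi_def)
lemma phi_zero2: "al' = dot a' p \<Longrightarrow> dot a' v = 0 \<Longrightarrow> phi a al a' al' p v = 0"
  by (simp add: phi_def)
lemma phi_zero3: "dot a v = 0 \<Longrightarrow> dot a' v = 0 \<Longrightarrow> phi a al a' al' p v = 0"
  by (simp add: phi_def)

lemma phi_sym: "phi a al a' al' p v = phi a' al' a al p v"
  by (simp add: phi_def add.commute)

lemma phi_lin: "phi a al a' al' p v =
   ((al - dot a p) * fst a' + (al' - dot a' p) * fst a) * fst v +
   ((al - dot a p) * snd a' + (al' - dot a' p) * snd a) * snd v"
  by (simp add: phi_def dot_def algebra_simps)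

lemma LIN:
  fixes w1 w2 v1 v2 u1 u2 :: "'a::field"
  assumes "w1 * v1 + w2 * v2 = 0" "w1 * u1 + w2 * u2 = 0" "v1 * u2 - v2 * u1 \<noteq> 0"
  shows "w1 = 0 \<and> w2 = 0"
proof -
  have "w1 * (v1 * u2 - v2 * u1) = u2 * (w1 * v1 + w2 * v2) - v2 * (w1 * u1 + w2 * u2)"
    by (simp add: algebra_simps)
  moreover have "w2 * (v1 * u2 - v2 * u1) = v1 * (w1 * u1 + w2 * u2) - u1 * (w1 * v1 + w2 * v2)"
    by (simp add: algebra_simps)
  ultimately show ?thesis using assms by auto
qed

lemma Lset_scale: "(c::'a::field) \<noteq> 0 \<Longrightarrow> Lset (c * fst k, c * snd k) (c * e) = Lset k e"
proof -
  assume c: "c \<noteq> 0"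
  have "c * fst k * fst x + c * snd k * snd x = c * e \<longleftrightarrow> fst k * fst x + snd k * snd x = e" for x
  proof -
    have "c * fst k * fst x + c * snd k * snd x = c * (fst k * fst x + snd k * snd x)" by (simp add: algebra_simps)
    then show ?thesis using c by simp
  qed
  then show ?thesis by (auto simp: Lset_mem)
qed

lemma W2R:
  assumes a: "a \<noteq> (0,0)" and a': "a' \<noteq> (0,0)"
    and w1: "(al - dot a p) * fst a' + (al' - dot a' p) * fst a = 0"
    and w2: "(al - dot a p) * snd a' + (al' - dot a' p) * snd a = 0"
  shows "srefl p (Lset a al) (Lset a' al') \<or> (srefl p (Lset a al) (Lset a al) \<and> srefl p (Lset a' al') (Lset a' al'))"
proof (cases "al - dot a p = 0")
  case True
  then have "(al' - dot a' p) * fst a = 0" "(al' - dot a' p) * snd a = 0" using w1 w2 by auto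
  then have "al' - dot a' p = 0" using a unfolding nz_iff by auto
  then have "p \<in> Lset a al" "p \<in> Lset a' al'" using True by (auto simp: Lset_def)
  then show ?thesis using mem_srefl_self is_lineI a a' by blast
next
  case False
  define s where "s = al - dot a p"
  define s' where "s' = al' - dot a' p"
  define c where "c = - s' / s"
  have s0: "s \<noteq> 0" using False s_def by simp
  have w1': "s * fst a' = - (s' * fst a)" using w1 unfolding s_def[symmetric] s'_def[symmetric]
    by (simp add: add_eq_0_iff2)
  have w2': "s * snd a' = - (s' * snd a)" using w2 unfolding s_def[symmetric] s'_def[symmetric]
    by (simp add: add_eq_0_iff2)
  have f1: "fst a' = c * fst a"
  proof -
    have "fst a' = (s * fst a') / s" using s0 by simp
    also have "\<dots> = c * fst a" using w1' by (simp add: c_def)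
    finally show ?thesis .
  qed
  have f2: "snd a' = c * snd a"
  proof -
    have "snd a' = (s * snd a') / s" using s0 by simp
    also have "\<dots> = c * snd a" using w2' by (simp add: c_def)
    finally show ?thesis .
  qed
  have c0: "c \<noteq> 0" using f1 f2 a' unfolding nz_iff by auto
  have a'eq: "a' = (c * fst a, c * snd a)" using f1 f2 by (metis prod.collapse)
  have dp: "dot a' p = c * dot a p" using f1 f2 by (simp add: dot_def algebra_simps)
  have cs: "c * s = - s'" using s0 by (simp add: c_def)
  have "al' = c * (2 * dot a p - al)"
  proof -
    have "al' = s' + dot a' p" by (simp add: s'_def)
    also have "\<dots> = - (c * s) + c * dot a p" using cs dp by simp
    also have "\<dots> = c * (2 * dot a p - al)" by (simp add: s_def algebra_simps)
    finally show ?thesis .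
  qed
  then have "Lset a' al' = Lset a (2 * dot a p - al)" using a'eq Lset_scale[OF c0] by simp
  then show ?thesis using srefl_Lset2 by metis
qed



definition PR :: "('a::field \<times> 'a) \<Rightarrow> ('a \<times> 'a) set \<Rightarrow> ('a \<times> 'a) set \<Rightarrow> bool" where
  "PR p L L' \<longleftrightarrow> srefl p L L' \<or> (srefl p L L \<and> srefl p L' L')"

lemma NP:
  assumes "is_line l" "is_line X" "is_line X'" "is_line Y" "is_line Y'"
    "\<not> parallel X Y" "\<not> parallel X Y'" "crosses l X X'"
    "crosses l X X' \<and> crosses l Y Y' \<longrightarrow> mid X X' l = mid Y Y' l"
    "parallel l X"
  shows False
proof -
  have "l \<noteq> X" using assms(8) by (simp add: crosses_def)
  then have "meet l X = Inf (dir l)" using meet_inf assms(10) by blast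
  then have mi: "mid X X' l = Inf (dir l)" using mid_inf1 by blast
  have nY: "\<not> parallel l Y"
  proof
    assume "parallel l Y"
    then have "parallel X Y" using par_trans[OF assms(2,1,4)] assms(10) par_sym by blast
    then show False using assms(6) by blast
  qed
  have nY': "\<not> parallel l Y'"
  proof
    assume "parallel l Y'"
    then have "parallel X Y'" using par_trans[OF assms(2,1,5)] assms(10) par_sym by blast
    then show False using assms(7) by blast
  qed
  have "crosses l Y Y'" using nY nY' npar_neq by (auto simp: crosses_def)
  then have e: "mid X X' l = mid Y Y' l" using assms(8,9) by blast
  obtain Y0 where "Y0 \<in> l" "Y0 \<in> Y" using npar_ex[OF nY] by blast
  then have m0: "meet l Y = Fin Y0" using meet_fin assms nY by blast
  obtain Y1 where "Y1 \<in> l" "Y1 \<in> Y'" using npar_ex[OF nY'] by blast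
  then have m1: "meet l Y' = Fin Y1" using meet_fin assms nY' by blast
  have "mid Y Y' l = Fin (pt_mid Y0 Y1)" using mid_fin[OF m0 m1] .
  then show False using e mi by simp
qed

lemma BL1:
  assumes two: "(2::'a::field) \<noteq> 0"
    and a: "a \<noteq> (0,0)" "A = Lset a al" and a': "a' \<noteq> (0,0)" "A' = Lset a' al'"
    and b: "b \<noteq> (0,0)" "B = Lset b be" and b': "b' \<noteq> (0,0)" "B' = Lset b' be'"
    and n: "n \<noteq> (0,0)" "l = Lset n (g::'a)"
    and np: "\<not> parallel A B" "\<not> parallel A B'" "\<not> parallel A' B" "\<not> parallel A' B'"
    and bis: "bisects l A B A' B'" and cr: "crosses l A A'" and m: "m = mid A A' l"
  shows "\<exists>p. m = Fin p \<and> p \<in> l \<and> phi a al a' al' p (perpv n) = 0 \<and> phi b be b' be' p (perpv n) = 0"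
proof -
  have lA: "is_line A" using a is_lineI by blast
  have lA': "is_line A'" using a' is_lineI by blast
  have lB: "is_line B" using b is_lineI by blast
  have lB': "is_line B'" using b' is_lineI by blast
  have ll: "is_line l" using n is_lineI by blast
  have parv: "parallel l (Lset k d) \<longleftrightarrow> dot k (perpv n) = 0" if "k \<noteq> (0,0)" for k d
  proof -
    have "det2 n k = dot k (perpv n)" by (simp add: det2_def dot_def perpv_def algebra_simps)
    then show ?thesis using par_iff[OF n(1) that] n(2) by simp
  qed
  have bimp: "crosses l A A' \<and> crosses l B B' \<longrightarrow> mid A A' l = mid B B' l"
    using bis by (simp add: bisects_def)
  have nA: "\<not> parallel l A"
    using NP[OF ll lA lA' lB lB' np(1) np(2) cr bimp] by blast
  have nA': "\<not> parallel l A'"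
  proof
    assume pa: "parallel l A'"
    have "crosses l A' A" using cr crosses_sym by blast
    moreover have "crosses l A' A \<and> crosses l B B' \<longrightarrow> mid A' A l = mid B B' l"
      using bimp crosses_sym mid_sym by metis
    ultimately show False using NP[OF ll lA' lA lB lB' np(3) np(4) _ _ pa] by blast
  qed
  obtain X where X: "X \<in> l" "X \<in> A" using npar_ex[OF nA] by blast
  obtain X' where X': "X' \<in> l" "X' \<in> A'" using npar_ex[OF nA'] by blast
  have mX: "meet l A = Fin X" using meet_fin[OF ll lA nA X] .
  have mX': "meet l A' = Fin X'" using meet_fin[OF ll lA' nA' X'] .
  define p where "p = pt_mid X X'"
  have mp: "m = Fin p" using m mid_fin[OF mX mX'] p_def by simp
  have pl: "p \<in> l"
  proof -
    have "dot n p * 2 = dot n X + dot n X'" using dot_pt_mid[OF two] p_def by simp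
    also have "\<dots> = g * 2" using X X' n by (simp add: Lset_def algebra_simps)
    finally have "dot n p = g" using two by simp
    then show ?thesis using n by (simp add: Lset_def)
  qed
  have phiA: "phi a al a' al' p (perpv n) = 0"
    unfolding p_def
    by (rule PHI[OF two]) (use X X' a a' n in \<open>auto simp: Lset_def\<close>)
  have phiB: "phi b be b' be' p (perpv n) = 0"
  proof (cases "crosses l B B'")
    case True
    then have mB: "mid B B' l = Fin p" using bimp cr m mp by simp
    have nB: "\<not> parallel l B"
    proof
      assume "parallel l B"
      moreover have "l \<noteq> B" using True by (simp add: crosses_def)
      ultimately have "meet l B = Inf (dir l)" using meet_inf by blast
      then show False using mB mid_inf1 by fastforce
    qed
    have nB': "\<not> parallel l B'"
    proof
      assume "parallel l B'"
      moreover have "l \<noteq> B'" using True by (simp add: crosses_def)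
      ultimately have "meet l B' = Inf (dir l)" using meet_inf by blast
      then show False using mB mid_inf2 by fastforce
    qed
    obtain Y where Y: "Y \<in> l" "Y \<in> B" using npar_ex[OF nB] by blast
    obtain Y' where Y': "Y' \<in> l" "Y' \<in> B'" using npar_ex[OF nB'] by blast
    have "mid B B' l = Fin (pt_mid Y Y')"
      using mid_fin[OF meet_fin[OF ll lB nB Y] meet_fin[OF ll lB' nB' Y']] .
    then have pY: "p = pt_mid Y Y'" using mB by simp
    show ?thesis unfolding pY
      by (rule PHI[OF two]) (use Y Y' b b' n in \<open>auto simp: Lset_def\<close>)
  next
    case False
    then have "l = B \<or> l = B' \<or> (parallel l B \<and> parallel l B')" by (auto simp: crosses_def)
    then consider "l = B" | "l = B'" | "parallel l B" "parallel l B'" by blast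
    then show ?thesis
    proof cases
      case 1
      then have "parallel l B" by (simp add: parallel_def)
      then have "dot b (perpv n) = 0" using parv b by blast
      moreover have "be = dot b p" using pl 1 b by (simp add: Lset_def)
      ultimately show ?thesis using phi_zero1 by metis
    next
      case 2
      then have "parallel l B'" by (simp add: parallel_def)
      then have "dot b' (perpv n) = 0" using parv b' by blast
      moreover have "be' = dot b' p" using pl 2 b' by (simp add: Lset_def)
      ultimately show ?thesis using phi_zero2 by metis
    next
      case 3
      then show ?thesis using parv b b' phi_zero3 by metis
    qed
  qed
  show ?thesis using mp pl phiA phiB by blast
qed

lemma quadD:
  assumes "quadrilateral A B A' B'"
  shows "is_line A" "is_line B" "is_line A'" "is_line B'"
    "\<not> parallel A B" "\<not> parallel A B'" "\<not> parallel A' B" "\<not> parallel A' B'"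
    "\<not> parallel B A'" "\<not> parallel B' A" "\<not> parallel B A" "\<not> parallel B' A'"
    "A \<noteq> A'" "B \<noteq> B'" "\<not> (\<exists>p. p \<in> A \<and> p \<in> B \<and> p \<in> A' \<and> p \<in> B')"
  using assms par_sym by (auto simp: quadrilateral_def)

lemma BM:
  assumes two: "(2::'a::field) \<noteq> 0"
    and a: "a \<noteq> (0,0)" "A = Lset a al" and a': "a' \<noteq> (0,0)" "A' = Lset a' al'"
    and b: "b \<noteq> (0,0)" "B = Lset b be" and b': "b' \<noteq> (0,0)" "B' = Lset b' be'"
    and n: "n \<noteq> (0,0)" "l = Lset n (g::'a)"
    and Q: "quadrilateral A B A' B'"
    and bm: "bisector_midpoint l A B A' B' m"
  shows "\<exists>p. m = Fin p \<and> p \<in> l \<and> phi a al a' al' p (perpv n) = 0 \<and> phi b be b' be' p (perpv n) = 0"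
proof -
  note q = quadD[OF Q]
  have bis: "bisects l A B A' B'" using bm by (simp add: bisector_midpoint_def)
  from bm consider "crosses l A A'" "m = mid A A' l" | "crosses l B B'" "m = mid B B' l"
    by (auto simp: bisector_midpoint_def)
  then show ?thesis
  proof cases
    case 1
    show ?thesis by (rule BL1[OF two a a' b b' n q(5-8) bis 1])
  next
    case 2
    have bis2: "bisects l B A' B' A"
      using bis crosses_sym mid_sym unfolding bisects_def by metis
    obtain p where "m = Fin p" "p \<in> l" "phi b be b' be' p (perpv n) = 0" "phi a' al' a al p (perpv n) = 0"
      using BL1[OF two b b' a' a n q(9) q(11) q(12) q(10) bis2 2] by blast
    then show ?thesis using phi_sym by metis
  qed
qed

lemma FWD:
  assumes two: "(2::'a::field) \<noteq> 0"
    and Q: "quadrilateral A B A' B'"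
    and ne: "l1 \<noteq> l2"
    and bm1: "bisector_midpoint l1 A B A' B' m"
    and bm2: "bisector_midpoint l2 A B A' B' m"
  shows "\<exists>p::'a \<times> 'a. m = Fin p \<and> PR p A A' \<and> PR p B B'"
proof -
  note q = quadD[OF Q]
  obtain a al where a: "a \<noteq> (0,0)" "A = Lset a al" using q(1) by (rule is_lineE)
  obtain a' al' where a': "a' \<noteq> (0,0)" "A' = Lset a' al'" using q(3) by (rule is_lineE)
  obtain b be where b: "b \<noteq> (0,0)" "B = Lset b be" using q(2) by (rule is_lineE)
  obtain b' be' where b': "b' \<noteq> (0,0)" "B' = Lset b' be'" using q(4) by (rule is_lineE)
  have l1: "is_line l1" using bm1 by (simp add: bisector_midpoint_def bisects_def)
  have l2: "is_line l2" using bm2 by (simp add: bisector_midpoint_def bisects_def)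
  obtain n g where n: "n \<noteq> (0,0)" "l1 = Lset n g" using l1 by (rule is_lineE)
  obtain n' g' where n': "n' \<noteq> (0,0)" "l2 = Lset n' g'" using l2 by (rule is_lineE)
  obtain p where p: "m = Fin p" "p \<in> l1" "phi a al a' al' p (perpv n) = 0" "phi b be b' be' p (perpv n) = 0"
    using BM[OF two a a' b b' n Q bm1] by blast
  obtain p2 where p2: "m = Fin p2" "p2 \<in> l2" "phi a al a' al' p2 (perpv n') = 0" "phi b be b' be' p2 (perpv n') = 0"
    using BM[OF two a a' b b' n' Q bm2] by blast
  have pp: "p2 = p" using p p2 by simp
  have dn: "det2 n n' \<noteq> 0"
  proof
    assume "det2 n n' = 0"
    then have "parallel l1 l2" using par_iff n n' by blast
    then show False using ne p(2) p2(2) pp by (auto simp: parallel_def)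
  qed
  have dv: "fst (perpv n) * snd (perpv n') - snd (perpv n) * fst (perpv n') \<noteq> 0"
    using dn by (simp add: perpv_def det2_def algebra_simps)
  have wa: "(al - dot a p) * fst a' + (al' - dot a' p) * fst a = 0 \<and> (al - dot a p) * snd a' + (al' - dot a' p) * snd a = 0"
    by (rule LIN[OF _ _ dv]) (use p(3) p2(3) pp in \<open>simp_all add: phi_lin\<close>)
  have wb: "(be - dot b p) * fst b' + (be' - dot b' p) * fst b = 0 \<and> (be - dot b p) * snd b' + (be' - dot b' p) * snd b = 0"
    by (rule LIN[OF _ _ dv]) (use p(4) p2(4) pp in \<open>simp_all add: phi_lin\<close>)
  have "PR p A A'" using W2R[OF a(1) a'(1)] wa a a' by (simp add: PR_def)
  moreover have "PR p B B'" using W2R[OF b(1) b'(1)] wb b b' by (simp add: PR_def)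
  ultimately show ?thesis using p(1) by blast
qed



definition lnp :: "('a::field \<times> 'a) \<Rightarrow> 'a \<times> 'a \<Rightarrow> ('a \<times> 'a) set" where
  "lnp p q = Lset (snd q - snd p, fst p - fst q) (dot (snd q - snd p, fst p - fst q) p)"

lemma ln_props:
  assumes "p \<noteq> q"
  shows "is_line (lnp p q)" "p \<in> lnp p q" "q \<in> lnp p q"
proof -
  have "(snd q - snd p, fst p - fst q) \<noteq> (0,0)" using assms by (cases p, cases q) auto
  then show "is_line (lnp p q)" unfolding lnp_def by (rule is_lineI)
  show "p \<in> lnp p q" by (simp add: lnp_def Lset_def)
  show "q \<in> lnp p q" by (simp add: lnp_def Lset_def dot_def algebra_simps)
qed

lemma disj_of_par: "parallel L M \<Longrightarrow> L \<noteq> M \<Longrightarrow> x \<in> L \<Longrightarrow> x \<notin> M"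
  by (auto simp: parallel_def)

lemma LSS:
  assumes two: "(2::'a::field) \<noteq> 0" and Q: "quadrilateral A B A' B'"
    and rA: "srefl (p::'a\<times>'a) A A'" and rB: "srefl p B B'"
  shows "centroid A B A' B' = p \<and> parallelogram A B A' B'"
proof -
  note q = quadD[OF Q]
  have "parallel A A'" using srefl_line(2)[OF q(1) rA] .
  moreover have "parallel B B'" using srefl_line(2)[OF q(2) rB] .
  ultimately have pg: "parallelogram A B A' B'" using Q by (simp add: parallelogram_def)
  have s1: "sig p (vertex A B) = vertex A' B'"
    using vref[OF q(1) q(2) q(3) q(4) rA rB q(5) q(8)] .
  have s2: "sig p (vertex B A') = vertex B' A"
    using vref[OF q(2) q(3) q(4) q(1) rB srefl_sym[OF rA] q(9) q(10)] .
  have "centroid A B A' B' = pt_mid p p"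
    unfolding centroid_def s1[symmetric] s2[symmetric] pt_mid_sig[OF two] ..
  then show ?thesis using pg pt_mid_same[OF two] by simp
qed

lemma pt_mid_sig2: "(2::'a::field) \<noteq> 0 \<Longrightarrow> pt_mid (pt_mid x y) (pt_mid (sig p x) (sig p y)) = (p::'a\<times>'a)"
proof -
  assume two: "(2::'a) \<noteq> 0"
  have h: "((u + w) / 2 + ((2 * z - u) + (2 * z - w)) / 2) / 2 = z" for u w z :: 'a
  proof -
    have e1: "(u + w) / 2 + ((2 * z - u) + (2 * z - w)) / 2 = ((u + w) + ((2 * z - u) + (2 * z - w))) / 2"
      by (rule add_divide_distrib[symmetric])
    have e2: "(u + w) + ((2 * z - u) + (2 * z - w)) = 2 * (2 * z)" by (simp add: algebra_simps)
    have e3: "2 * (2 * z) / 2 = 2 * z" by (rule nonzero_mult_div_cancel_left[OF two])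
    have e4: "2 * z / 2 = z" by (rule nonzero_mult_div_cancel_left[OF two])
    show ?thesis unfolding e1 e2 e3 e4 ..
  qed
  show ?thesis by (simp only: pt_mid_def sig_def fst_conv snd_conv h prod.collapse)
qed

lemma LSF:
  assumes two: "(2::'a::field) \<noteq> 0" and Q: "quadrilateral A B A' B'"
    and rA: "srefl (p::'a\<times>'a) A A'" and rB: "srefl p B B" and rB': "srefl p B' B'"
  shows "centroid A B A' B' = p \<and> (\<exists>C D C' D'. parallelogram C D C' D' \<and> vertices C D C' D' = vertices A B A' B')"
proof -
  note q = quadD[OF Q]
  define P1 where "P1 = vertex A B"
  define P2 where "P2 = vertex B A'"
  define P3 where "P3 = vertex A' B'"
  define P4 where "P4 = vertex B' A"
  have pAA: "parallel A A'" using srefl_line(2)[OF q(1) rA] .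
  have s1: "sig p P1 = P2"
    using vref[OF q(1) q(2) q(3) q(2) rA rB q(5) q(7)] P1_def P2_def vertex_sym by metis
  have s3: "sig p P3 = P4"
    using vref[OF q(3) q(4) q(1) q(4) srefl_sym[OF rA] rB' q(8) q(6)] P3_def P4_def vertex_sym by metis
  have cen: "centroid A B A' B' = p"
    unfolding centroid_def P1_def[symmetric] P2_def[symmetric] P3_def[symmetric] P4_def[symmetric]
      s1[symmetric] s3[symmetric] using pt_mid_sig2[OF two] .
  have P1: "P1 \<in> A" "P1 \<in> B" using vertex_mem[OF q(1) q(2) q(5)] P1_def by auto
  have P2: "P2 \<in> B" "P2 \<in> A'" using vertex_mem[OF q(2) q(3) q(9)] P2_def by auto
  have P3: "P3 \<in> A'" "P3 \<in> B'" using vertex_mem[OF q(3) q(4) q(8)] P3_def by auto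
  have P4: "P4 \<in> B'" "P4 \<in> A" using vertex_mem[OF q(4) q(1) q(10)] P4_def by auto
  have nA'1: "P1 \<notin> A'" using disj_of_par[OF pAA q(13) P1(1)] .
  have nA'4: "P4 \<notin> A'" using disj_of_par[OF pAA q(13) P4(2)] .
  have nA2: "P2 \<notin> A" using disj_of_par[OF pAA q(13)] P2(2) by blast
  have nA3: "P3 \<notin> A" using disj_of_par[OF pAA q(13)] P3(1) by blast
  have n13: "P1 \<noteq> P3" using nA'1 P3 by blast
  have n24: "P2 \<noteq> P4" using nA2 P4 by blast
  have n12: "P1 \<noteq> P2" using nA'1 P2 by blast
  define D where "D = lnp P1 P3"
  define D' where "D' = lnp P2 P4"
  have D: "is_line D" "P1 \<in> D" "P3 \<in> D" using ln_props[OF n13] D_def by auto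
  have D': "is_line D'" "P2 \<in> D'" "P4 \<in> D'" using ln_props[OF n24] D'_def by auto
  have rD: "srefl p D D'" using two_pt_srefl[OF D(1) D'(1) n13 D(2) D(3)] s1 s3 D' by simp
  have pDD: "parallel D D'" using srefl_line(2)[OF D(1) rD] .
  have AD: "A \<noteq> D" using nA3 D by blast
  have A'D: "A' \<noteq> D" using nA'1 D by blast
  have AD': "A \<noteq> D'" using nA2 D' by blast
  have A'D': "A' \<noteq> D'" using nA'4 D' by blast
  have DD': "D \<noteq> D'"
  proof
    assume e: "D = D'"
    have "P1 = P4" using two_pt[OF q(1) D(1) _ P1(1) P4(2) D(2)] D'(3) e AD by blast
    moreover have "P2 = P3" using two_pt[OF q(3) D(1) _ P2(2) P3(1)] D'(2) D(3) e A'D by blast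
    ultimately have "B = B'" using two_pt[OF q(2) q(4) n12 P1(2) P2(1)] P4(1) P3(2) by simp
    then show False using q(14) by blast
  qed
  have quad: "quadrilateral A D A' D'"
    unfolding quadrilateral_def
    using q(1) D(1) q(3) D'(1) AD q(13) AD' A'D DD' A'D' nA'1
      share_npar[OF AD P1(1) D(2)] share_npar[OF A'D[symmetric] D(3) P3(1)]
      share_npar[OF A'D' P2(2) D'(2)] share_npar[OF AD'[symmetric] D'(3) P4(2)]
      disj_of_par[OF pAA q(13)]
    by auto
  have pg: "parallelogram A D A' D'" using quad pAA pDD by (simp add: parallelogram_def)
  have v1: "vertex A D = P1" using vertex_eq[OF q(1) D(1) share_npar[OF AD P1(1) D(2)] P1(1) D(2)] .
  have v2: "vertex D A' = P3" using vertex_eq[OF D(1) q(3) share_npar[OF A'D[symmetric] D(3) P3(1)] D(3) P3(1)] .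
  have v3: "vertex A' D' = P2" using vertex_eq[OF q(3) D'(1) share_npar[OF A'D' P2(2) D'(2)] P2(2) D'(2)] .
  have v4: "vertex D' A = P4" using vertex_eq[OF D'(1) q(1) share_npar[OF AD'[symmetric] D'(3) P4(2)] D'(3) P4(2)] .
  have "vertices A D A' D' = vertices A B A' B'"
    unfolding vertices_def v1 v2 v3 v4 P1_def[symmetric] P2_def[symmetric] P3_def[symmetric] P4_def[symmetric]
    by auto
  then show ?thesis using cen pg by blast
qed

lemma quad_rot: "quadrilateral A B A' B' \<Longrightarrow> quadrilateral B A' B' A"
  unfolding quadrilateral_def by auto

lemma vertices_rot: "vertices B A' B' A = vertices A B A' B'"
  unfolding vertices_def by auto

lemma centroid_rot: "centroid B A' B' A = centroid A B A' B'"
  unfolding centroid_def using pt_mid_sym by metis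

lemma FWD2:
  fixes A B A' B' :: "('a::field \<times> 'a) set"
  assumes two: "(2::'a::field) \<noteq> 0"
    and Q: "quadrilateral A B A' B'"
    and ne: "l1 \<noteq> l2"
    and bm1: "bisector_midpoint l1 A B A' B' m"
    and bm2: "bisector_midpoint l2 A B A' B' m"
  shows "m = Fin (centroid A B A' B') \<and> (\<exists>C D C' D'. parallelogram C D C' D' \<and> vertices C D C' D' = vertices A B A' B')"
proof -
  note q = quadD[OF Q]
  obtain p :: "'a \<times> 'a" where p: "m = Fin p" "PR p A A'" "PR p B B'" using FWD[OF two Q ne bm1 bm2] by blast
  from p(2,3) consider "srefl p A A'" "srefl p B B'" | "srefl p A A'" "srefl p B B" "srefl p B' B'"
    | "srefl p A A" "srefl p A' A'" "srefl p B B'"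
    | "srefl p A A" "srefl p A' A'" "srefl p B B" "srefl p B' B'"
    unfolding PR_def by blast
  then show ?thesis
  proof cases
    case 1 then show ?thesis using LSS[OF two Q] p(1) by blast
  next
    case 2 then show ?thesis using LSF[OF two Q] p(1) by blast
  next
    case 3
    have "centroid B A' B' A = p \<and> (\<exists>C D C' D'. parallelogram C D C' D' \<and> vertices C D C' D' = vertices B A' B' A)"
      using LSF[OF two quad_rot[OF Q] 3(3) 3(2) 3(1)] .
    then show ?thesis using p(1) vertices_rot centroid_rot by metis
  next
    case 4
    then have "p \<in> A" "p \<in> A'" "p \<in> B" "p \<in> B'" using srefl_self_mem[OF two] q(1-4) by blast+
    then show ?thesis using q(15) by blast
  qed
qed



lemma par_norm:
  assumes k: "k \<noteq> (0,0)" and k': "k' \<noteq> (0,0)" and p: "parallel (Lset k d) (Lset k' (d'::'a::field))"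
  shows "\<exists>e. Lset k' d' = Lset k e"
proof -
  have dt: "fst k * snd k' = snd k * fst k'" using par_iff[OF k k'] p by (simp add: det2_def)
  obtain c where c: "c \<noteq> 0" "k' = (c * fst k, c * snd k)"
  proof (cases "fst k = 0")
    case False
    define c where "c = fst k' / fst k"
    have "snd k' = c * snd k" using dt False by (simp add: c_def field_simps)
    moreover have "fst k' = c * fst k" using False by (simp add: c_def)
    ultimately have e: "k' = (c * fst k, c * snd k)" by (metis prod.collapse)
    then have "c \<noteq> 0" using k' by auto
    then show ?thesis using e that by blast
  next
    case True
    then have s: "snd k \<noteq> 0" using k nz_iff by blast
    define c where "c = snd k' / snd k"
    have "fst k' = 0" using dt True s by simp
    then have e: "k' = (c * fst k, c * snd k)" using s True by (simp add: c_def) (metis prod.collapse)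
    then have "c \<noteq> 0" using k' by auto
    then show ?thesis using e that by blast
  qed
  have "Lset k' d' = Lset (c * fst k, c * snd k) (c * (d' / c))" using c by simp
  also have "\<dots> = Lset k (d' / c)" by (rule Lset_scale[OF c(1)])
  finally show ?thesis by blast
qed

lemma cram_sum:
  assumes "det2 c d \<noteq> 0"
  shows "fst (cram c g d e) + fst (cram c g' d e') = fst (cram c g' d e) + fst (cram c g d e')"
    "snd (cram c g d e) + snd (cram c g' d e') = snd (cram c g' d e) + snd (cram c g d e')"
proof -
  let ?D = "det2 c d"
  have "fst (cram c g d e) + fst (cram c g' d e') = ((g * snd d - e * snd c) + (g' * snd d - e' * snd c)) / ?D"
    by (simp add: cram_def add_divide_distrib)
  also have "\<dots> = ((g' * snd d - e * snd c) + (g * snd d - e' * snd c)) / ?D"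
    by (simp add: algebra_simps)
  also have "\<dots> = fst (cram c g' d e) + fst (cram c g d e')"
    by (simp add: cram_def add_divide_distrib)
  finally show "fst (cram c g d e) + fst (cram c g' d e') = fst (cram c g' d e) + fst (cram c g d e')" .
  have "snd (cram c g d e) + snd (cram c g' d e') = ((fst c * e - fst d * g) + (fst c * e' - fst d * g')) / ?D"
    by (simp add: cram_def add_divide_distrib)
  also have "\<dots> = ((fst c * e - fst d * g') + (fst c * e' - fst d * g)) / ?D"
    by (simp add: algebra_simps)
  also have "\<dots> = snd (cram c g' d e) + snd (cram c g d e')"
    by (simp add: cram_def add_divide_distrib)
  finally show "snd (cram c g d e) + snd (cram c g' d e') = snd (cram c g' d e) + snd (cram c g d e')" .
qed

lemma sig_mid: "(2::'a::field) \<noteq> 0 \<Longrightarrow> sig (pt_mid x y) x = (y::'a\<times>'a)"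
proof -
  assume two: "(2::'a) \<noteq> 0"
  have h: "2 * (z / 2) = z" for z :: 'a using two by simp
  show ?thesis by (simp only: sig_def pt_mid_def fst_conv snd_conv h) simp
qed

lemma PG:
  fixes C D C' D' :: "('a::field \<times> 'a) set"
  assumes two: "(2::'a) \<noteq> 0" and pg: "parallelogram C D C' D'"
  shows "distinct [vertex C D, vertex D C', vertex C' D', vertex D' C]
    \<and> sig (pt_mid (vertex C D) (vertex C' D')) (vertex D C') = vertex D' C"
proof -
  have Q: "quadrilateral C D C' D'" and pC: "parallel C C'" and pD: "parallel D D'"
    using pg by (auto simp: parallelogram_def)
  note q = quadD[OF Q]
  define Q1 where "Q1 = vertex C D"
  define Q2 where "Q2 = vertex D C'"
  define Q3 where "Q3 = vertex C' D'"
  define Q4 where "Q4 = vertex D' C"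
  have Q1: "Q1 \<in> C" "Q1 \<in> D" using vertex_mem[OF q(1) q(2) q(5)] Q1_def by auto
  have Q2: "Q2 \<in> D" "Q2 \<in> C'" using vertex_mem[OF q(2) q(3) q(9)] Q2_def by auto
  have Q3: "Q3 \<in> C'" "Q3 \<in> D'" using vertex_mem[OF q(3) q(4) q(8)] Q3_def by auto
  have Q4: "Q4 \<in> D'" "Q4 \<in> C" using vertex_mem[OF q(4) q(1) q(10)] Q4_def by auto
  have dC: "x \<in> C \<Longrightarrow> x \<notin> C'" for x using disj_of_par[OF pC q(13)] by blast
  have dD: "x \<in> D \<Longrightarrow> x \<notin> D'" for x using disj_of_par[OF pD q(14)] by blast
  have dist: "distinct [Q1, Q2, Q3, Q4]"
    using dC dD Q1 Q2 Q3 Q4 by (simp only: distinct.simps list.set insert_iff empty_iff) blast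
  obtain c g where c: "c \<noteq> (0,0)" "C = Lset c g" using q(1) by (rule is_lineE)
  obtain d e where d: "d \<noteq> (0,0)" "D = Lset d e" using q(2) by (rule is_lineE)
  obtain c0 g0 where c0: "c0 \<noteq> (0,0)" "C' = Lset c0 g0" using q(3) by (rule is_lineE)
  obtain d0 e0 where d0: "d0 \<noteq> (0,0)" "D' = Lset d0 e0" using q(4) by (rule is_lineE)
  obtain g' where g': "C' = Lset c g'" using par_norm[OF c(1) c0(1)] pC c c0 by metis
  obtain e' where e': "D' = Lset d e'" using par_norm[OF d(1) d0(1)] pD d d0 by metis
  have dcd: "det2 c d \<noteq> 0" using par_iff[OF c(1) d(1)] q(5) c d by blast
  have v1: "Q1 = cram c g d e"
    using vertex_eq[OF q(1) q(2) q(5)] cram_mem[OF dcd] c d Q1_def by metis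
  have "\<not> parallel C' D" using q(9) par_sym by blast
  have v2: "Q2 = cram c g' d e"
    using vertex_eq[OF q(3) q(2) \<open>\<not> parallel C' D\<close>] cram_mem[OF dcd] g' d Q2_def vertex_sym by metis
  have v3: "Q3 = cram c g' d e'"
    using vertex_eq[OF q(3) q(4) q(8)] cram_mem[OF dcd] g' e' Q3_def by metis
  have v4: "Q4 = cram c g d e'"
    using vertex_eq[OF q(1) q(4) q(6)] cram_mem[OF dcd] c e' Q4_def vertex_sym by metis
  have s1: "fst Q1 + fst Q3 = fst Q2 + fst Q4" "snd Q1 + snd Q3 = snd Q2 + snd Q4"
    using cram_sum[OF dcd] v1 v2 v3 v4 by auto
  have "sig (pt_mid Q1 Q3) Q2 = Q4"
  proof -
    have "fst (sig (pt_mid Q1 Q3) Q2) = fst Q1 + fst Q3 - fst Q2" using two by (simp add: sig_def pt_mid_def)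
    moreover have "snd (sig (pt_mid Q1 Q3) Q2) = snd Q1 + snd Q3 - snd Q2" using two by (simp add: sig_def pt_mid_def)
    ultimately show ?thesis using s1 by (simp add: algebra_simps prod_eq_iff)
  qed
  then show ?thesis using dist Q1_def Q2_def Q3_def Q4_def by simp
qed

lemma card4_distinct:
  assumes "distinct [q1, q2, q3, q4]" "{p1, p2, p3, p4} = {q1, q2, q3, q4}"
  shows "distinct [p1, p2, p3, p4]"
proof -
  have "card {q1, q2, q3, q4} = 4" using assms(1) by simp
  then have c: "card {p1, p2, p3, p4} = 4" using assms(2) by simp
  show ?thesis
  proof (rule ccontr)
    assume "\<not> distinct [p1, p2, p3, p4]"
    then have "card {p1, p2, p3, p4} \<le> 3"
      by (auto simp: card_insert_if intro: card_insert_le order_trans)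
    then show False using c by simp
  qed
qed

lemma pairing:
  assumes inv: "\<And>x. f (f x) = x" and dist: "distinct [p1, p2, p3, p4]"
    and cl: "\<And>x. x \<in> {p1, p2, p3, p4} \<Longrightarrow> f x \<in> {p1, p2, p3, p4} \<and> f x \<noteq> x"
  shows "(f p1 = p3 \<and> f p2 = p4) \<or> (f p1 = p2 \<and> f p3 = p4) \<or> (f p1 = p4 \<and> f p2 = p3)"
proof -
  have i: "f x = f y \<Longrightarrow> x = y" for x y by (metis inv)
  have h1: "f p1 \<in> {p2, p3, p4}" using cl[of p1] by auto
  have h2: "f p2 \<in> {p1, p3, p4}" using cl[of p2] by auto
  have h3: "f p3 \<in> {p1, p2, p4}" using cl[of p3] by auto
  show ?thesis using h1 h2 h3 dist inv i by auto
qed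

lemma CROSS:
  assumes Q: "quadrilateral A B A' B'" and l: "is_line l"
  shows "crosses l A A' \<or> crosses l B B'"
proof (rule ccontr)
  note q = quadD[OF Q]
  assume "\<not> (crosses l A A' \<or> crosses l B B')"
  then have "parallel l A \<or> parallel l A'" "parallel l B \<or> parallel l B'"
    by (auto simp: crosses_def parallel_def)
  then show False
    using par_trans[OF q(1) l q(2)] par_trans[OF q(1) l q(4)] par_trans[OF q(3) l q(2)] par_trans[OF q(3) l q(4)]
      par_sym q(5-8) by metis
qed

lemma MIDR:
  assumes two: "(2::'a::field) \<noteq> 0" and L: "is_line L" and L': "is_line (L'::('a\<times>'a) set)" and l: "is_line l"
    and pr: "PR m L L'" and ml: "m \<in> l" and cr: "crosses l L L'"
  shows "mid L L' l = Fin m"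
proof -
  from pr consider "srefl m L L'" | "srefl m L L" "srefl m L' L'" unfolding PR_def by blast
  then show ?thesis
  proof cases
    case 1
    have pLL: "parallel L L'" using srefl_line(2)[OF L 1] .
    have nL: "\<not> parallel l L"
    proof
      assume "parallel l L"
      then have "parallel l L'" using par_trans[OF l L L'] pLL by blast
      then show False using cr \<open>parallel l L\<close> by (simp add: crosses_def)
    qed
    have nL': "\<not> parallel l L'"
    proof
      assume "parallel l L'"
      then have "parallel l L" using par_trans[OF l L' L] pLL par_sym by blast
      then show False using cr \<open>parallel l L'\<close> by (simp add: crosses_def)
    qed
    obtain X where X: "X \<in> l" "X \<in> L" using npar_ex[OF nL] by blast
    have "sig m X \<in> L'" using srefl_D[OF 1 X(2)] .
    moreover have "sig m X \<in> l" using srefl_D[OF mem_srefl_self[OF l ml] X(1)] .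
    ultimately have "mid L L' l = Fin (pt_mid X (sig m X))"
      using mid_fin[OF meet_fin[OF l L nL X] meet_fin[OF l L' nL']] by blast
    then show ?thesis using pt_mid_sig[OF two] by simp
  next
    case 2
    have mL: "m \<in> L" using srefl_self_mem[OF two L 2(1)] .
    have mL': "m \<in> L'" using srefl_self_mem[OF two L' 2(2)] .
    have nL: "\<not> parallel l L" using share_npar[OF _ ml mL] cr by (simp add: crosses_def)
    have nL': "\<not> parallel l L'" using share_npar[OF _ ml mL'] cr by (simp add: crosses_def)
    have "mid L L' l = Fin (pt_mid m m)"
      using mid_fin[OF meet_fin[OF l L nL ml mL] meet_fin[OF l L' nL' ml mL']] .
    then show ?thesis using pt_mid_same[OF two] by simp
  qed
qed

lemma BIS:
  assumes two: "(2::'a::field) \<noteq> 0" and Q: "quadrilateral A B A' B'"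
    and pA: "PR m A A'" and pB: "PR m B B'" and l: "is_line l" and ml: "(m::'a\<times>'a) \<in> l"
  shows "bisector_midpoint l A B A' B' (Fin m)"
proof -
  note q = quadD[OF Q]
  have mA: "crosses l A A' \<Longrightarrow> mid A A' l = Fin m" using MIDR[OF two q(1) q(3) l pA ml] .
  have mB: "crosses l B B' \<Longrightarrow> mid B B' l = Fin m" using MIDR[OF two q(2) q(4) l pB ml] .
  have "bisects l A B A' B'" using l mA mB by (simp add: bisects_def)
  then show ?thesis using CROSS[OF Q l] mA mB by (auto simp: bisector_midpoint_def)
qed

lemma CONV:
  fixes A B A' B' :: "('a::field \<times> 'a) set"
  assumes two: "(2::'a) \<noteq> 0" and Q: "quadrilateral A B A' B'"
    and pg: "parallelogram C D C' D'" and vv: "vertices C D C' D' = vertices A B A' B'"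
  shows "\<exists>l1 l2 m. l1 \<noteq> l2 \<and> bisector_midpoint l1 A B A' B' m \<and> bisector_midpoint l2 A B A' B' m"
proof -
  note q = quadD[OF Q]
  define Q1 where "Q1 = vertex C D"
  define Q2 where "Q2 = vertex D C'"
  define Q3 where "Q3 = vertex C' D'"
  define Q4 where "Q4 = vertex D' C"
  define P1 where "P1 = vertex A B"
  define P2 where "P2 = vertex B A'"
  define P3 where "P3 = vertex A' B'"
  define P4 where "P4 = vertex B' A"
  define m where "m = pt_mid Q1 Q3"
  have pgf: "distinct [Q1, Q2, Q3, Q4]" "sig m Q2 = Q4"
    using PG[OF two pg] Q1_def Q2_def Q3_def Q4_def m_def by auto
  have s1: "sig m Q1 = Q3" using sig_mid[OF two] m_def by simp
  have s3: "sig m Q3 = Q1" using s1 sig_sig by metis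
  have s4: "sig m Q4 = Q2" using pgf(2) sig_sig by metis
  have V: "{P1, P2, P3, P4} = {Q1, Q2, Q3, Q4}"
    using vv unfolding vertices_def P1_def P2_def P3_def P4_def Q1_def Q2_def Q3_def Q4_def by simp
  have dP: "distinct [P1, P2, P3, P4]" using card4_distinct[OF pgf(1) V] .
  have cl: "sig m x \<in> {P1, P2, P3, P4} \<and> sig m x \<noteq> x" if "x \<in> {P1, P2, P3, P4}" for x
    using that pgf s1 s3 s4 unfolding V by auto
  have P1: "P1 \<in> A" "P1 \<in> B" using vertex_mem[OF q(1) q(2) q(5)] P1_def by auto
  have P2: "P2 \<in> B" "P2 \<in> A'" using vertex_mem[OF q(2) q(3) q(9)] P2_def by auto
  have P3: "P3 \<in> A'" "P3 \<in> B'" using vertex_mem[OF q(3) q(4) q(8)] P3_def by auto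
  have P4: "P4 \<in> B'" "P4 \<in> A" using vertex_mem[OF q(4) q(1) q(10)] P4_def by auto
  have n12: "P1 \<noteq> P2" and n13: "P1 \<noteq> P3" and n14: "P1 \<noteq> P4" and n23: "P2 \<noteq> P3"
    and n24: "P2 \<noteq> P4" and n34: "P3 \<noteq> P4" using dP by auto
  have pr: "(sig m P1 = P3 \<and> sig m P2 = P4) \<or> (sig m P1 = P2 \<and> sig m P3 = P4) \<or> (sig m P1 = P4 \<and> sig m P2 = P3)"
  proof (rule pairing[where f="sig m"])
    show "\<And>x. sig m (sig m x) = x" by simp
    show "distinct [P1, P2, P3, P4]" by (rule dP)
    show "\<And>x. x \<in> {P1, P2, P3, P4} \<Longrightarrow> sig m x \<in> {P1, P2, P3, P4} \<and> sig m x \<noteq> x" by (rule cl)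
  qed
  from pr have prs: "PR m A A' \<and> PR m B B'"
  proof (elim disjE conjE)
    assume a: "sig m P1 = P3" "sig m P2 = P4"
    then have b: "sig m P4 = P2" "sig m P3 = P1" using sig_sig by metis+
    have "srefl m A A'" using two_pt_srefl[OF q(1) q(3) n14 P1(1) P4(2)] a b P3 P2 by simp
    moreover have "srefl m B B'" using two_pt_srefl[OF q(2) q(4) n12 P1(2) P2(1)] a P3 P4 by simp
    ultimately show ?thesis by (simp add: PR_def)
  next
    assume a: "sig m P1 = P2" "sig m P3 = P4"
    then have b: "sig m P2 = P1" "sig m P4 = P3" using sig_sig by metis+
    have "srefl m A A'" using two_pt_srefl[OF q(1) q(3) n14 P1(1) P4(2)] a b P3 P2 by simp
    moreover have "srefl m B B" using two_pt_srefl[OF q(2) q(2) n12 P1(2) P2(1)] a b P1 P2 by simp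
    moreover have "srefl m B' B'" using two_pt_srefl[OF q(4) q(4) n34 P3(2) P4(1)] a b P3 P4 by simp
    ultimately show ?thesis by (simp add: PR_def)
  next
    assume a: "sig m P1 = P4" "sig m P2 = P3"
    then have b: "sig m P4 = P1" "sig m P3 = P2" using sig_sig by metis+
    have "srefl m B B'" using two_pt_srefl[OF q(2) q(4) n12 P1(2) P2(1)] a P3 P4 by simp
    moreover have "srefl m A A" using two_pt_srefl[OF q(1) q(1) n14 P1(1) P4(2)] a b P1 P4 by simp
    moreover have "srefl m A' A'" using two_pt_srefl[OF q(3) q(3) n23 P2(2) P3(1)] a b P2 P3 by simp
    ultimately show ?thesis by (simp add: PR_def)
  qed
  define l1 where "l1 = Lset (1::'a, 0) (fst m)"
  define l2 where "l2 = Lset (0::'a, 1) (snd m)"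
  have l1: "is_line l1" "m \<in> l1" using is_lineI[of "(1::'a, 0)"] by (auto simp: l1_def Lset_mem)
  have l2: "is_line l2" "m \<in> l2" using is_lineI[of "(0::'a, 1)"] by (auto simp: l2_def Lset_mem)
  have "(fst m, snd m + 1) \<in> l1" "(fst m, snd m + 1) \<notin> l2" by (auto simp: l1_def l2_def Lset_mem)
  then have ne: "l1 \<noteq> l2" by blast
  show ?thesis using BIS[OF two Q prs[THEN conjunct1] prs[THEN conjunct2]] l1 l2 ne by blast
qed


theorem proposition3p5:
  fixes A B A' B' :: "('a::field \<times> 'a) set"
  assumes char: "(2::'a) \<noteq> 0"
    and Q: "quadrilateral A B A' B'"
  shows "((\<exists>l1 l2 m. l1 \<noteq> l2 \<and> bisector_midpoint l1 A B A' B' m \<and> bisector_midpoint l2 A B A' B' m)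
            \<longleftrightarrow> (\<exists>C D C' D'. parallelogram C D C' D' \<and> vertices C D C' D' = vertices A B A' B'))
         \<and> (\<forall>l1 l2 m. l1 \<noteq> l2 \<and> bisector_midpoint l1 A B A' B' m \<and> bisector_midpoint l2 A B A' B' m
              \<longrightarrow> m = Fin (centroid A B A' B'))"
proof (intro conjI allI impI)
  show "(\<exists>l1 l2 m. l1 \<noteq> l2 \<and> bisector_midpoint l1 A B A' B' m \<and> bisector_midpoint l2 A B A' B' m)
            \<longleftrightarrow> (\<exists>C D C' D'. parallelogram C D C' D' \<and> vertices C D C' D' = vertices A B A' B')"
  proof
    assume "\<exists>l1 l2 m. l1 \<noteq> l2 \<and> bisector_midpoint l1 A B A' B' m \<and> bisector_midpoint l2 A B A' B' m"
    then obtain l1 l2 m where h: "l1 \<noteq> l2" "bisector_midpoint l1 A B A' B' m" "bisector_midpoint l2 A B A' B' m"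
      by blast
    show "\<exists>C D C' D'. parallelogram C D C' D' \<and> vertices C D C' D' = vertices A B A' B'"
      using FWD2[OF char Q h(1) h(2) h(3)] by (rule conjunct2)
  next
    assume "\<exists>C D C' D'. parallelogram C D C' D' \<and> vertices C D C' D' = vertices A B A' B'"
    then obtain C D C' D' where h: "parallelogram C D C' D'" "vertices C D C' D' = vertices A B A' B'"
      by blast
    show "\<exists>l1 l2 m. l1 \<noteq> l2 \<and> bisector_midpoint l1 A B A' B' m \<and> bisector_midpoint l2 A B A' B' m"
      by (rule CONV[OF char Q h(1) h(2)])
  qed
next
  fix l1 l2 m
  assume "l1 \<noteq> l2 \<and> bisector_midpoint l1 A B A' B' m \<and> bisector_midpoint l2 A B A' B' m"
  then have h: "l1 \<noteq> l2" "bisector_midpoint l1 A B A' B' m" "bisector_midpoint l2 A B A' B' m" by auto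
  show "m = Fin (centroid A B A' B')" using FWD2[OF char Q h(1) h(2) h(3)] by (rule conjunct1)
qed

end
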